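(* Let $r,i,m$ be positive integers with $\gcd(r-i,2^m+1)=1$ and $\gcd(r,i(2^m-1))=1$, and let $b\in\mathbb{F}_{2^{2m}}^*$ satisfy $b^{\frac{2^{2m}-1}{\gcd(i(2^m-1),\,2^{2m}-1)}}\neq 1$ and $b^{2^m+1}=1$. Then the polynomial \[ f(x)=x^{i(2^m-1)+r}+bx^r \] induces a bijection of $\mathbb{F}_{2^{2m}}^*$ (and hence is a permutation polynomial of $\mathbb{F}_{2^{2m}}$).
   Context: A polynomial is a permutation polynomial of a finite field if it induces a bijection of that field. *)

theory Defs
  imports "HOL-Computational_Algebra.Polynomial"
begin

definition permutation_polynomial :: "'a::{finite,field} poly \<Rightarrow> bool" where
  "permutation_polynomial p \<longleftrightarrow> bij (poly p)"

end

theory Submission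
  imports Defs
begin

lemma pow_card:
  fixes x :: "'a::{finite,field}"
  assumes "x \<noteq> 0"
  shows "x ^ (card (UNIV::'a set) - 1) = 1"
proof -
  let ?S = "UNIV - {0::'a}"
  have bij: "bij_betw (\<lambda>y. x*y) ?S ?S"
    unfolding bij_betw_def inj_on_def
  proof (intro conjI ballI impI)
    show "(*) x ` ?S = ?S"
    proof
      show "(*) x ` ?S \<subseteq> ?S" using assms by auto
      show "?S \<subseteq> (*) x ` ?S"
      proof
        fix y assume "y \<in> ?S"
        then have "y = x * (y/x)" "y/x \<in> ?S" using assms by auto
        then show "y \<in> (*) x ` ?S" by blast
      qed
    qed
  qed (use assms in auto)
  have "prod (\<lambda>y. x*y) ?S = prod id ?S"
    using prod.reindex_bij_betw[OF bij, of id] by simp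
  moreover have "prod (\<lambda>y. x*y) ?S = x ^ card ?S * prod id ?S"
    by (simp add: prod.distrib)
  moreover have "prod id ?S \<noteq> 0" by (simp add: prod_zero_iff)
  ultimately have "x ^ card ?S = 1" by simp
  moreover have "card ?S = card (UNIV::'a set) - 1" by (simp add: card_Diff_singleton)
  ultimately show ?thesis by simp
qed

lemma pow_coprime_one:
  fixes t :: "'a::field"
  assumes "t^a = 1" "t^b = 1" "coprime a b"
  shows "t = 1"
proof (cases "a = 0")
  case True
  then have "b = 1" using assms(3) by simp
  then show ?thesis using assms(2) by simp
next
  case False
  obtain x y where xy: "a*x = b*y + gcd a b" using bezout_nat[OF False] by blast
  have "gcd a b = 1" using assms(3) by simp
  then have "t^(a*x) = t^(b*y) * t" using xy by (simp add: power_add)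
  then show ?thesis using assms(1,2) by (simp add: power_mult)
qed

theorem proposition4:
  fixes r i m :: nat and b :: "'a::{finite,field}"
  assumes card: "card (UNIV :: 'a set) = 2 ^ (2 * m)"
    and pos: "r > 0" "i > 0" "m > 0"
    and g1: "gcd (int r - int i) (2 ^ m + 1) = 1"
    and g2: "gcd r (i * (2 ^ m - 1)) = 1"
    and b0: "b \<noteq> 0"
    and b1: "b ^ ((2 ^ (2 * m) - 1) div gcd (i * (2 ^ m - 1)) (2 ^ (2 * m) - 1)) \<noteq> 1"
    and b2: "b ^ (2 ^ m + 1) = 1"
  defines "f \<equiv> monom 1 (i * (2 ^ m - 1) + r) + monom b r"
  shows "bij_betw (poly f) (UNIV - {0}) (UNIV - {0}) \<and> permutation_polynomial f"
proof -
  define q :: nat where "q = 2 ^ m"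
  define N :: nat where "N = 2 ^ (2 * m) - 1"
  have q1: "q \<ge> 2" using pos(3) unfolding q_def
    by (metis One_nat_def Suc_leI one_less_numeral_iff power_increasing_iff power_one_right semiring_norm(76))
  have Nq: "N = (q - 1) * (q + 1)"
  proof -
    have "N = q*q - 1" unfolding N_def q_def by (simp add: power_mult power2_eq_square mult.commute)
    then show ?thesis using q1 by (cases q) (auto simp: algebra_simps)
  qed
  have Npos: "N > 0" using Nq q1 by simp
  have pc: "\<And>x::'a. x \<noteq> 0 \<Longrightarrow> x ^ N = 1" using pow_card card unfolding N_def by metis
  have Nodd: "odd N" unfolding N_def using pos(3) by simp
  have "(-1::'a) ^ N = 1" using pc by simp
  then have "(-1::'a) = 1" using Nodd by simp
  have "(2::'a) = 1 - (-1)" by simp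
  then have two: "(2::'a) = 0" using \<open>(-1::'a) = 1\<close> by simp
  have frob: "\<And>a c::'a. (a+c)^(2^k) = a^(2^k) + c^(2^k)" for k
  proof (induction k)
    case 0 then show ?case by simp
  next
    case (Suc k)
    fix a c :: 'a
    have "(a+c)^(2^Suc k) = ((a+c)^(2^k))^2" by (simp add: power_mult[symmetric] mult.commute)
    also have "\<dots> = (a^(2^k) + c^(2^k))^2" using Suc by simp
    also have "\<dots> = (a^(2^k))^2 + (c^(2^k))^2" by (simp add: power2_sum two)
    also have "\<dots> = a^(2^Suc k) + c^(2^Suc k)" by (simp add: power_mult[symmetric] mult.commute)
    finally show "(a+c)^(2^Suc k) = a^(2^Suc k) + c^(2^Suc k)" .
  qed
  have frobq: "\<And>a c::'a. (a+c)^q = a^q + c^q" unfolding q_def using frob by blast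
  have negb: "\<And>z::'a. -z = z" 
  proof -
    fix z :: 'a
    have "-z = (-1)*z" by simp
    then show "-z = z" using \<open>(-1::'a) = 1\<close> by simp
  qed
  have polyf: "\<And>x. poly f x = x^r * (x^(q-1))^i + b * x^r"
    unfolding f_def q_def by (simp add: poly_monom power_add power_mult[symmetric] mult.commute)
  have bq: "b^q * b = 1" using b2 unfolding q_def by (simp add: mult.commute)
  have key: "(x^(q-1))^i + b \<noteq> 0 \<and> (x^(q-1))^(q+1) = 1 \<and>
      (poly f x)^(q-1) * (x^(q-1))^i * b = (x^(q-1))^r \<and> poly f x = x^r * ((x^(q-1))^i + b)"
    if x0: "x \<noteq> 0" for x
  proof -
    define u where "u = x^(q-1)"
    define h where "h = u^i + b"
    have u1: "u^(q+1) = 1" unfolding u_def using pc[OF x0] Nq by (simp only: power_mult[symmetric])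
    have u0: "u \<noteq> 0" unfolding u_def using x0 by simp
    have uq: "u^q * u = 1" using u1 by (simp add: mult.commute)
    have h0: "h \<noteq> 0"
    proof
      assume "h = 0"
      then have ub0: "u^i = b" using negb[of "u^i"] unfolding h_def by (metis add_eq_0_iff)
      have ub: "x^(i*(q-1)) = b" using ub0 unfolding u_def by (metis power_mult mult.commute)
      define K where "K = i*(q-1)"
      define g where "g = gcd K N"
      have gp: "g > 0" unfolding g_def using Npos by simp
      obtain a where a: "K = g*a" unfolding g_def by (meson gcd_dvd1 dvdE)
      obtain c where c: "N = g*c" unfolding g_def by (meson gcd_dvd2 dvdE)
      have Nc: "N div g = c" using c gp by simp
      have "b ^ (N div g) = (x^K)^c" using ub Nc unfolding K_def by simp
      also have "\<dots> = x^(K*c)" by (simp add: power_mult)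
      also have "K*c = N*a" using a c by simp
      also have "x^(N*a) = 1" using pc[OF x0] by (simp add: power_mult)
      finally have "b ^ (N div g) = 1" .
      then show False using b1 unfolding g_def K_def N_def q_def by simp
    qed
    have uiq: "(u^i)^q = (u^q)^i" by (metis power_mult mult.commute)
    have hq: "h^q = (u^q)^i + b^q" unfolding h_def using frobq[of "u^i" b] uiq by simp
    have "h^q * u^i * b = (u^q)^i * u^i * b + b^q * u^i * b"
      unfolding hq by (simp add: distrib_right)
    also have "(u^q)^i * u^i = (u^q*u)^i" by (simp add: power_mult_distrib)
    also have "b^q * u^i * b = (b^q*b) * u^i" by (simp add: ac_simps)
    finally have "h^q * u^i * b = h" using uq bq unfolding h_def by (simp add: add.commute)
    moreover have "q = Suc (q-1)" using q1 by simp
    then have "h^q = h^(q-1) * h" by (metis power_Suc2)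
    ultimately have "h * (h^(q-1) * u^i * b) = h * 1" by (simp add: ac_simps)
    then have hk: "h^(q-1) * u^i * b = 1" using h0 by (metis mult_left_cancel)
    have pf: "poly f x = x^r * h" unfolding h_def u_def polyf by (simp add: algebra_simps)
    have "(poly f x)^(q-1) * u^i * b = (x^(q-1))^r * (h^(q-1) * u^i * b)"
      unfolding pf by (simp add: power_mult_distrib power_mult[symmetric] mult.commute mult.left_commute mult.assoc)
    then have "(poly f x)^(q-1) * u^i * b = u^r" by (metis hk mult_1_right u_def)
    then show ?thesis using h0 u1 pf unfolding h_def u_def by simp
  qed
  have nz: "poly f x \<noteq> 0" if "x \<noteq> 0" for x
    using key[OF that] that by simp
  have cop1: "coprime r (q-1)" using g2 unfolding q_def
    by (metis coprime_iff_gcd_eq_1 coprime_mult_right_iff)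
  have inj0: "x = y" if x0: "x \<noteq> 0" and y0: "y \<noteq> 0" and e: "poly f x = poly f y" for x y
  proof -
    define u where "u = x^(q-1)"
    define v where "v = y^(q-1)"
    define W where "W = poly f x"
    have ku: "W^(q-1) * u^i * b = u^r" "u^(q+1) = 1" "u^i + b \<noteq> 0"
      using key[OF x0] unfolding u_def W_def by auto
    have kv: "W^(q-1) * v^i * b = v^r" "v^(q+1) = 1" "v^i + b \<noteq> 0"
      using key[OF y0] e unfolding v_def W_def by auto
    have u0: "u \<noteq> 0" "v \<noteq> 0" using x0 y0 unfolding u_def v_def by auto
    have "u^r * v^i = W^(q-1) * u^i * b * v^i" using ku(1) by simp
    also have "\<dots> = (W^(q-1) * v^i * b) * u^i" by (simp only: ac_simps)
    also have "\<dots> = v^r * u^i" using kv(1) by simp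
    finally have "u^r * v^i = v^r * u^i" .
    define t where "t = u / v"
    have tr: "t^r = t^i" unfolding t_def using u0 \<open>u^r * v^i = v^r * u^i\<close>
      by (simp add: power_divide divide_simps mult.commute)
    have tq: "t^(q+1) = 1" unfolding t_def using ku(2) kv(2) by (simp add: power_divide)
    have t0: "t \<noteq> 0" unfolding t_def using u0 by simp
    have g1': "gcd (int r - int i) (int (q+1)) = 1" using g1 unfolding q_def by (simp add: add.commute)
    have t1: "t = 1"
    proof (cases "i \<le> r")
      case True
      have "t^(r-i) * t^i = t^i" using tr True by (simp add: power_add[symmetric])
      then have "t^(r-i) = 1" using t0 by simp
      moreover have "coprime (r-i) (q+1)"
      proof -
        have e1: "int r - int i = int (r-i)" using True by simp
        have "gcd (int (r-i)) (int (q+1)) = 1" using g1' unfolding e1 gcd_neg1_int .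
        then have "gcd (r-i) (q+1) = 1" unfolding gcd_int_int_eq by simp
        then show ?thesis by (simp only: coprime_iff_gcd_eq_1)
      qed
      ultimately show ?thesis using pow_coprime_one tq by blast
    next
      case False
      have "t^(i-r) * t^r = t^i" using False by (simp add: power_add[symmetric])
      then have "t^(i-r) * t^r = t^r" using tr by simp
      then have "t^(i-r) = 1" using t0 by simp
      moreover have "coprime (i-r) (q+1)"
      proof -
        have e1: "int r - int i = - int (i-r)" using False by simp
        have "gcd (int (i-r)) (int (q+1)) = 1" using g1' unfolding e1 gcd_neg1_int .
        then have "gcd (i-r) (q+1) = 1" unfolding gcd_int_int_eq by simp
        then show ?thesis by (simp only: coprime_iff_gcd_eq_1)
      qed
      ultimately show ?thesis using pow_coprime_one tq by blast
    qed
    then have uv: "u = v" unfolding t_def using u0 by simp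
    have "x^r * (u^i + b) = y^r * (u^i+b)"
      using key[OF x0] key[OF y0] e uv unfolding u_def v_def by simp
    then have xr: "x^r = y^r" using ku(3) by simp
    define s where "s = x / y"
    have "s^r = 1" unfolding s_def using xr y0 by (simp add: power_divide)
    moreover have "s^(q-1) = 1" unfolding s_def using uv y0 unfolding u_def v_def by (simp add: power_divide)
    ultimately have "s = 1" using pow_coprime_one cop1 by blast
    then show ?thesis unfolding s_def using y0 by simp
  qed
  have f00: "poly f 0 = 0" using polyf[of 0] pos(1) by (simp add: zero_power)
  have injall: "inj (poly f)"
  proof (rule injI)
    fix x y assume e: "poly f x = poly f y"
    show "x = y"
    proof (cases "x = 0 \<or> y = 0")
      case True then show ?thesis using e nz f00 by (metis)
    next
      case False then show ?thesis using inj0 e by blast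
    qed
  qed
  have bij: "bij (poly f)" using injall finite_UNIV_inj_surj[of "poly f"] by (simp add: bij_def)
  have "bij_betw (poly f) (UNIV - {0}) (UNIV - {0})"
  proof -
    have "bij_betw (poly f) (UNIV - {0}) (UNIV - {poly f 0})"
      using bij by (metis bij_betw_DiffI bij_betw_singletonI bij_def f00 image_empty image_insert inj_on_subset subset_UNIV bij_betw_def)
    then show ?thesis using f00 by simp
  qed
  then show ?thesis using bij unfolding permutation_polynomial_def by simp
qed

end
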